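(* In the protocol IT-HS described in the context, with $f<\frac{n}{3}$ Byzantine parties, if two nonfaulty parties send messages $\langle tag,val,v\rangle$ and $\langle tag',val',v\rangle$ (for the same view $v$) with $tag,tag'\in\{key1,key2,key3,lock\}$, then $val=val'$.
   Context: Model. $n$ parties with inputs $x_i$; up to $f$ Byzantine (arbitrary behaviour), the rest nonfaulty; authenticated point-to-point channels; partial synchrony: after an unknown time GST every message arrives within known $\Delta$ time and clocks are synchronized, before GST delays are arbitrary but finite. Protocol IT-HS (party $i$). Variables: $lock\gets 0$, $lock\_val\gets x_i$; $key3\gets 0$, $key3\_val\gets x_i$; $key2\gets 0$, $key2\_val\gets x_i$, $prev\_key2\gets -1$; $key1\gets 0$, $key1\_val\gets x_i$, $prev\_key1\gets -1$; $view\gets 0$; $highest\_request[j]\gets 0$, $highest\_abort[j]\gets 0$ for $j\in[n]$. "Send-upon-join $m$": for each $j$, send $m$ to $j$ as soon as $highest\_request[j]$ equals the current view. Background: (B1) on $\langle request,v\rangle$ from $j$, $highest\_request[j]\gets\max(highest\_request[j],v)$. (B2) on $\langle done,val\rangle$ from $f+1$ parties with the same $val$: if no $done$ sent yet, send $\langle done,val\rangle$ to all. (B3) on $\langle done,val\rangle$ from $n-f$ parties with the same $val$: decide $val$, terminate. (B4) on $\langle abort,v\rangle$ from $j$ with $highest\_abort[j]<v$: $highest\_abort[j]\gets v$; $u\gets$ the $(f+1)$-th largest entry of $highest\_abort$; if $u>highest\_abort[i]$ send $\langle abort,u\rangle$ to all and set $highest\_abort[i]\gets u$; $w\gets$ the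 $(n-f)$-th largest entry; if $w\ge view$ set $view\gets w+1$. Views: for each value $v$ of $view$, while $view=v$: fresh per-view state; after $11\Delta$ local time send $\langle abort,v\rangle$ to all; ignore other views' messages except $abort$, $done$, $request$; primary $p=(v\bmod n)+1$. View change: send $\langle request,v\rangle$ to all; when $highest\_request[p]=v$ send $\langle suggest,key3,key3\_val,key2,key2\_val,prev\_key2,v\rangle$ to $p$; send-upon-join $\langle proof,key1,key1\_val,prev\_key1,v\rangle$. If $i=p$: upon first $\langle suggest,k3,v3,k2,v2,pk2,v\rangle$ from a party, if $pk2<k2<v$ add $(k2,v2,pk2)$ to $key2\_proofs$; if $k3=0$ add $(k3,v3)$ to $suggestions$; else if $k3<v$ add $(k3,v3)$ as soon as at least $f+1$ triples $(k,w,pk)\in key2\_proofs$ satisfy $k3\le pk$ or ($k3\le k$ and $w=v3$); once $|suggestions|\ge n-f$, send-upon-join $\langle propose,k,w,v\rangle$ for $(k,w)\in suggestions$ with maximal $k$. Message processing: upon first $\langle proof,k1,v1,pk1,v\rangle$ from a party, if $v>k1>pk1$ add $(k1,v1,pk1)$ to $proofs$. Upon first $\langle propose,key,val,v\rangle$ from $p$: if $lock=0$ or $val=lock\_val$, send-upon-join $\langle echo,val,v\rangle$; else if $v>key\ge lock$, then once at least $f+1$ triples $(k,w,pk)\in proofs$ satisfy $lock\le pk$ or ($lock\le k$ and $w\ne lock\_val$), send-upon-join $\langle echo,val,v\rangle$. Upon $\langle echo,val,v\rangle$ from $n-f$ parties with the same $val$: send-upon-join $\langle key1,val,v\rangle$;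 if $key1\_val\ne val$ then $prev\_key1\gets key1$, $key1\_val\gets val$; $key1\gets v$. Upon $\langle key1,val,v\rangle$ from $n-f$ parties (same $val$): send-upon-join $\langle key2,val,v\rangle$; if $key2\_val\ne val$ then $prev\_key2\gets key2$, $key2\_val\gets val$; $key2\gets v$. Upon $\langle key2,val,v\rangle$ from $n-f$ (same $val$): send-upon-join $\langle key3,val,v\rangle$; $key3\gets v$, $key3\_val\gets val$. Upon $\langle key3,val,v\rangle$ from $n-f$ (same $val$): send-upon-join $\langle lock,val,v\rangle$; $lock\gets v$, $lock\_val\gets val$. Upon $\langle lock,val,v\rangle$ from $n-f$ (same $val$): if no $done$ sent yet, send $\langle done,val\rangle$ to all. *)

theory Defs
  imports Main
begin

text \<open>Parties are 1..n.  Views and keys are naturals; the prev_key fields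
  (initially -1) are integers.\<close>

datatype 'v msg =
    MRequest nat
  | MDone 'v
  | MAbort nat
  | MSuggest nat 'v nat 'v int nat   \<comment> \<open>key3, key3_val, key2, key2_val, prev_key2, view\<close>
  | MProof nat 'v int nat            \<comment> \<open>key1, key1_val, prev_key1, view\<close>
  | MPropose nat 'v nat              \<comment> \<open>key, val, view\<close>
  | MEcho 'v nat
  | MKey1 'v nat
  | MKey2 'v nat
  | MKey3 'v nat
  | MLock 'v nat

record 'v lst =
  view :: nat
  lock :: nat
  lock_val :: 'v
  key3 :: nat
  key3_val :: 'v
  key2 :: nat
  key2_val :: 'v
  prev_key2 :: int
  key1 :: nat
  key1_val :: 'v
  prev_key1 :: int
  hreq :: "nat \<Rightarrow> nat"
  habort :: "nat \<Rightarrow> nat"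
  done_rcvd :: "(nat \<times> 'v) set"
  done_sent :: bool
  decided :: "'v option"
  \<comment> \<open>per-view state (reset on every view change)\<close>
  abort_sent :: bool
  suggest_sent :: bool
  queued :: "'v msg set"            \<comment> \<open>messages to be sent with send-upon-join\<close>
  sent_to :: "(nat \<times> 'v msg) set"  \<comment> \<open>send-upon-join deliveries already done\<close>
  rcvd :: "(nat \<times> 'v msg) set"    \<comment> \<open>echo/key/lock messages of the current view\<close>
  suggest_from :: "nat set"
  key2_proofs :: "nat \<Rightarrow> (nat \<times> 'v \<times> int) option"
  pend_sugg :: "nat \<Rightarrow> (nat \<times> 'v) option"
  suggestions :: "nat \<Rightarrow> (nat \<times> 'v) option"
  proposed :: bool
  proof_from :: "nat set"
  proofs :: "nat \<Rightarrow> (nat \<times> 'v \<times> int) option"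
  proposal :: "(nat \<times> 'v) option"
  awaiting :: "'v option"

definition parties :: "nat \<Rightarrow> nat set" where
  "parties n = {1..n}"

definition prim :: "nat \<Rightarrow> nat \<Rightarrow> nat" where
  "prim n v = v mod n + 1"

definition to_all :: "nat \<Rightarrow> 'v msg \<Rightarrow> (nat \<times> 'v msg) set" where
  "to_all n m = (\<lambda>r. (r, m)) ` parties n"

definition kth_largest :: "(nat \<Rightarrow> nat) \<Rightarrow> nat \<Rightarrow> nat \<Rightarrow> nat" where
  "kth_largest h n k = rev (sort (map h [1..<Suc n])) ! (k - 1)"

definition enter_view :: "nat \<Rightarrow> 'v lst \<Rightarrow> nat \<Rightarrow> 'v lst \<times> (nat \<times> 'v msg) set" where
  "enter_view n s w =
    (s\<lparr>view := w, abort_sent := False, suggest_sent := False,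
       queued := {MProof (key1 s) (key1_val s) (prev_key1 s) w}, sent_to := {}, rcvd := {},
       suggest_from := {}, key2_proofs := (\<lambda>_. None), pend_sugg := (\<lambda>_. None),
       suggestions := (\<lambda>_. None), proposed := False, proof_from := {},
       proofs := (\<lambda>_. None), proposal := None, awaiting := None\<rparr>,
     to_all n (MRequest w))"

definition init_lst :: "nat \<Rightarrow> (nat \<Rightarrow> 'v) \<Rightarrow> nat \<Rightarrow> 'v lst" where
  "init_lst n x i = fst (enter_view n
     \<lparr>view = 0, lock = 0, lock_val = x i, key3 = 0, key3_val = x i,
      key2 = 0, key2_val = x i, prev_key2 = -1, key1 = 0, key1_val = x i, prev_key1 = -1,
      hreq = (\<lambda>_. 0), habort = (\<lambda>_. 0), done_rcvd = {}, done_sent = False, decided = None,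
      abort_sent = False, suggest_sent = False, queued = {}, sent_to = {}, rcvd = {},
      suggest_from = {}, key2_proofs = (\<lambda>_. None), pend_sugg = (\<lambda>_. None),
      suggestions = (\<lambda>_. None), proposed = False, proof_from = {}, proofs = (\<lambda>_. None),
      proposal = None, awaiting = None\<rparr> 0)"

definition abort_rule :: "nat \<Rightarrow> nat \<Rightarrow> nat \<Rightarrow> nat \<Rightarrow> nat \<Rightarrow> 'v lst \<Rightarrow> 'v lst \<times> (nat \<times> 'v msg) set" where
  "abort_rule n f i j v s =
    (if habort s j < v then
       (let s1 = s\<lparr>habort := (habort s)(j := v)\<rparr>;
            u = kth_largest (habort s1) n (f + 1);
            s2 = (if u > habort s1 i then s1\<lparr>habort := (habort s1)(i := u)\<rparr> else s1);
            o1 = (if u > habort s1 i then to_all n (MAbort u) else {});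
            w = kth_largest (habort s2) n (n - f)
        in if w \<ge> view s2 then (fst (enter_view n s2 (w + 1)), o1 \<union> snd (enter_view n s2 (w + 1)))
           else (s2, o1))
     else (s, {}))"

definition recv :: "nat \<Rightarrow> nat \<Rightarrow> nat \<Rightarrow> nat \<Rightarrow> 'v msg \<Rightarrow> 'v lst \<Rightarrow> 'v lst \<times> (nat \<times> 'v msg) set" where
  "recv n f i j m s = (case m of
      MRequest v \<Rightarrow> (s\<lparr>hreq := (hreq s)(j := max (hreq s j) v)\<rparr>, {})
    | MDone val \<Rightarrow> (s\<lparr>done_rcvd := insert (j, val) (done_rcvd s)\<rparr>, {})
    | MAbort v \<Rightarrow> abort_rule n f i j v s
    | MSuggest k3 v3 k2 v2 pk2 v \<Rightarrow>
        (if v = view s \<and> i = prim n v \<and> j \<notin> suggest_from s then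
           (let s1 = s\<lparr>suggest_from := insert j (suggest_from s)\<rparr>;
                s2 = (if pk2 < int k2 \<and> k2 < v
                      then s1\<lparr>key2_proofs := (key2_proofs s1)(j := Some (k2, v2, pk2))\<rparr> else s1);
                s3 = (if k3 = 0 then s2\<lparr>suggestions := (suggestions s2)(j := Some (k3, v3))\<rparr>
                      else if k3 < v then s2\<lparr>pend_sugg := (pend_sugg s2)(j := Some (k3, v3))\<rparr>
                      else s2)
            in (s3, {}))
         else (s, {}))
    | MProof k1 v1 pk1 v \<Rightarrow>
        (if v = view s \<and> j \<notin> proof_from s then
           (let s1 = s\<lparr>proof_from := insert j (proof_from s)\<rparr>
            in (if k1 < v \<and> pk1 < int k1
                then s1\<lparr>proofs := (proofs s1)(j := Some (k1, v1, pk1))\<rparr> else s1, {}))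
         else (s, {}))
    | MPropose k w v \<Rightarrow>
        (if v = view s \<and> j = prim n v \<and> proposal s = None then
           (let s1 = s\<lparr>proposal := Some (k, w)\<rparr>
            in (if lock s = 0 \<or> w = lock_val s then s1\<lparr>queued := insert (MEcho w v) (queued s1)\<rparr>
                else if k < v \<and> lock s \<le> k then s1\<lparr>awaiting := Some w\<rparr>
                else s1, {}))
         else (s, {}))
    | MEcho val v \<Rightarrow> (if v = view s then (s\<lparr>rcvd := insert (j, m) (rcvd s)\<rparr>, {}) else (s, {}))
    | MKey1 val v \<Rightarrow> (if v = view s then (s\<lparr>rcvd := insert (j, m) (rcvd s)\<rparr>, {}) else (s, {}))
    | MKey2 val v \<Rightarrow> (if v = view s then (s\<lparr>rcvd := insert (j, m) (rcvd s)\<rparr>, {}) else (s, {}))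
    | MKey3 val v \<Rightarrow> (if v = view s then (s\<lparr>rcvd := insert (j, m) (rcvd s)\<rparr>, {}) else (s, {}))
    | MLock val v \<Rightarrow> (if v = view s then (s\<lparr>rcvd := insert (j, m) (rcvd s)\<rparr>, {}) else (s, {})))"

definition cnt :: "nat \<Rightarrow> 'v lst \<Rightarrow> 'v msg \<Rightarrow> nat" where
  "cnt n s m = card {j \<in> parties n. (j, m) \<in> rcvd s}"

text \<open>Spontaneous / guarded local steps of a nonfaulty (non-terminated) party i:
  lstep n f i s s' out, where out is the set of (receiver, message) pairs sent.\<close>
inductive lstep :: "nat \<Rightarrow> nat \<Rightarrow> nat \<Rightarrow> 'v lst \<Rightarrow> 'v lst \<Rightarrow> (nat \<times> 'v msg) set \<Rightarrow> bool"
  for n f i where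
  timer: "\<lbrakk>decided s = None; \<not> abort_sent s\<rbrakk> \<Longrightarrow>
     lstep n f i s (s\<lparr>abort_sent := True\<rparr>) (to_all n (MAbort (view s)))"
| suggest: "\<lbrakk>decided s = None; \<not> suggest_sent s; hreq s (prim n (view s)) = view s\<rbrakk> \<Longrightarrow>
     lstep n f i s (s\<lparr>suggest_sent := True\<rparr>)
       {(prim n (view s), MSuggest (key3 s) (key3_val s) (key2 s) (key2_val s) (prev_key2 s) (view s))}"
| send_join: "\<lbrakk>decided s = None; m \<in> queued s; j \<in> parties n; (j, m) \<notin> sent_to s;
      hreq s j = view s\<rbrakk> \<Longrightarrow>
     lstep n f i s (s\<lparr>sent_to := insert (j, m) (sent_to s)\<rparr>) {(j, m)}"
| add_sugg: "\<lbrakk>decided s = None; pend_sugg s j = Some (k3, v3); suggestions s j = None;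
      card {l \<in> parties n. \<exists>k w pk. key2_proofs s l = Some (k, w, pk) \<and>
              (int k3 \<le> pk \<or> (k3 \<le> k \<and> w = v3))} \<ge> f + 1\<rbrakk> \<Longrightarrow>
     lstep n f i s (s\<lparr>suggestions := (suggestions s)(j := Some (k3, v3))\<rparr>) {}"
| propose: "\<lbrakk>decided s = None; i = prim n (view s); \<not> proposed s;
      card {l \<in> parties n. suggestions s l \<noteq> None} \<ge> n - f;
      suggestions s j = Some (k, w);
      \<forall>l k' w'. suggestions s l = Some (k', w') \<longrightarrow> k' \<le> k\<rbrakk> \<Longrightarrow>
     lstep n f i s (s\<lparr>proposed := True, queued := insert (MPropose k w (view s)) (queued s)\<rparr>) {}"
| echo_await: "\<lbrakk>decided s = None; awaiting s = Some w;
      card {l \<in> parties n. \<exists>k w' pk. proofs s l = Some (k, w', pk) \<and>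
              (int (lock s) \<le> pk \<or> (lock s \<le> k \<and> w' \<noteq> lock_val s))} \<ge> f + 1\<rbrakk> \<Longrightarrow>
     lstep n f i s (s\<lparr>awaiting := None, queued := insert (MEcho w (view s)) (queued s)\<rparr>) {}"
| key1: "\<lbrakk>decided s = None; cnt n s (MEcho val (view s)) \<ge> n - f;
      MKey1 val (view s) \<notin> queued s\<rbrakk> \<Longrightarrow>
     lstep n f i s (s\<lparr>queued := insert (MKey1 val (view s)) (queued s),
                      prev_key1 := (if key1_val s \<noteq> val then int (key1 s) else prev_key1 s),
                      key1_val := val, key1 := view s\<rparr>) {}"
| key2: "\<lbrakk>decided s = None; cnt n s (MKey1 val (view s)) \<ge> n - f;
      MKey2 val (view s) \<notin> queued s\<rbrakk> \<Longrightarrow>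
     lstep n f i s (s\<lparr>queued := insert (MKey2 val (view s)) (queued s),
                      prev_key2 := (if key2_val s \<noteq> val then int (key2 s) else prev_key2 s),
                      key2_val := val, key2 := view s\<rparr>) {}"
| key3: "\<lbrakk>decided s = None; cnt n s (MKey2 val (view s)) \<ge> n - f;
      MKey3 val (view s) \<notin> queued s\<rbrakk> \<Longrightarrow>
     lstep n f i s (s\<lparr>queued := insert (MKey3 val (view s)) (queued s),
                      key3_val := val, key3 := view s\<rparr>) {}"
| lock: "\<lbrakk>decided s = None; cnt n s (MKey3 val (view s)) \<ge> n - f;
      MLock val (view s) \<notin> queued s\<rbrakk> \<Longrightarrow>
     lstep n f i s (s\<lparr>queued := insert (MLock val (view s)) (queued s),
                      lock_val := val, lock := view s\<rparr>) {}"
| done_lock: "\<lbrakk>decided s = None; cnt n s (MLock val (view s)) \<ge> n - f; \<not> done_sent s\<rbrakk> \<Longrightarrow>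
     lstep n f i s (s\<lparr>done_sent := True\<rparr>) (to_all n (MDone val))"
| done_amp: "\<lbrakk>decided s = None; card {j \<in> parties n. (j, val) \<in> done_rcvd s} \<ge> f + 1;
      \<not> done_sent s\<rbrakk> \<Longrightarrow>
     lstep n f i s (s\<lparr>done_sent := True\<rparr>) (to_all n (MDone val))"
| decide: "\<lbrakk>decided s = None; card {j \<in> parties n. (j, val) \<in> done_rcvd s} \<ge> n - f\<rbrakk> \<Longrightarrow>
     lstep n f i s (s\<lparr>decided := Some val\<rparr>) {}"

record 'v gst =
  loc :: "nat \<Rightarrow> 'v lst"
  net :: "(nat \<times> nat \<times> 'v msg) set"   \<comment> \<open>all messages ever sent: (sender, receiver, msg)\<close>
  dlv :: "(nat \<times> nat \<times> 'v msg) set"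

definition ginit :: "nat \<Rightarrow> nat set \<Rightarrow> (nat \<Rightarrow> 'v) \<Rightarrow> 'v gst" where
  "ginit n F x = \<lparr>loc = init_lst n x,
     net = {(i, r, MRequest 0) | i r. i \<in> parties n - F \<and> r \<in> parties n}, dlv = {}\<rparr>"

inductive ithsreach :: "nat \<Rightarrow> nat \<Rightarrow> nat set \<Rightarrow> (nat \<Rightarrow> 'v) \<Rightarrow> 'v gst \<Rightarrow> bool"
  for n f F x where
  init: "ithsreach n f F x (ginit n F x)"
| local: "\<lbrakk>ithsreach n f F x g; i \<in> parties n - F; lstep n f i (loc g i) s' out\<rbrakk> \<Longrightarrow>
     ithsreach n f F x (g\<lparr>loc := (loc g)(i := s'),
                          net := net g \<union> {(i, r, m) | r m. (r, m) \<in> out}\<rparr>)"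
| deliver: "\<lbrakk>ithsreach n f F x g; (j, i, m) \<in> net g; (j, i, m) \<notin> dlv g; i \<in> parties n - F;
      decided (loc g i) = None; recv n f i j m (loc g i) = (s', out)\<rbrakk> \<Longrightarrow>
     ithsreach n f F x (g\<lparr>loc := (loc g)(i := s'),
                          net := net g \<union> {(i, r, m') | r m'. (r, m') \<in> out},
                          dlv := insert (j, i, m) (dlv g)\<rparr>)"
| byz: "\<lbrakk>ithsreach n f F x g; j \<in> F; r \<in> parties n\<rbrakk> \<Longrightarrow>
     ithsreach n f F x (g\<lparr>net := insert (j, r, m) (net g)\<rparr>)"

end

theory Submission
  imports Defs
begin

definition good :: "nat \<Rightarrow> nat \<Rightarrow> (nat \<times> nat \<times> 'v msg) set \<Rightarrow> nat \<Rightarrow> 'v msg \<Rightarrow> bool" where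
"good n f N i m = (case m of
    MKey1 a v \<Rightarrow> n - f \<le> card {j \<in> parties n. (j, i, MEcho a v) \<in> N}
  | MKey2 a v \<Rightarrow> n - f \<le> card {j \<in> parties n. (j, i, MKey1 a v) \<in> N}
  | MKey3 a v \<Rightarrow> n - f \<le> card {j \<in> parties n. (j, i, MKey2 a v) \<in> N}
  | MLock a v \<Rightarrow> n - f \<le> card {j \<in> parties n. (j, i, MKey3 a v) \<in> N}
  | _ \<Rightarrow> True)"

lemma finite_parties[simp]: "finite (parties n)" by (simp add: parties_def)

lemma card_sub_mono: "(\<And>j. P j \<Longrightarrow> Q j) \<Longrightarrow> card {j \<in> parties n. P j} \<le> card {j \<in> parties n. Q j}"
  by (rule card_mono) auto

lemma good_mono: "good n f N i m \<Longrightarrow> N \<subseteq> N' \<Longrightarrow> good n f N' i m"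
  unfolding good_def
  by (cases m) (simp_all, (erule order_trans, rule card_sub_mono, blast)+)

definition linv :: "nat \<Rightarrow> nat \<Rightarrow> nat \<Rightarrow> 'v lst \<Rightarrow> (nat \<times> nat \<times> 'v msg) set \<Rightarrow> bool" where
"linv n f i s N =
 ((\<forall>j m. (j,m) \<in> rcvd s \<longrightarrow> (j,i,m) \<in> N) \<and>
  (\<forall>w. awaiting s = Some w \<longrightarrow> (\<exists>k. proposal s = Some (k,w))) \<and>
  (\<forall>a v. MEcho a v \<in> queued s \<longrightarrow> v = view s \<and> (\<exists>k. proposal s = Some (k,a))) \<and>
  (\<forall>a v r. (i,r,MEcho a v) \<in> N \<longrightarrow> v < view s \<or> (v = view s \<and> (\<exists>k. proposal s = Some (k,a)))) \<and>
  (\<forall>a b v r r'. (i,r,MEcho a v) \<in> N \<longrightarrow> (i,r',MEcho b v) \<in> N \<longrightarrow> a = b) \<and>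
  (\<forall>m. m \<in> queued s \<longrightarrow> good n f N i m) \<and>
  (\<forall>r m. (i,r,m) \<in> N \<longrightarrow> good n f N i m))"

lemma linv_mono:
  assumes L: "linv n f i s N" and sub: "N \<subseteq> N'" and fr: "\<And>r m. (i,r,m) \<in> N' \<Longrightarrow> (i,r,m) \<in> N"
  shows "linv n f i s N'"
  unfolding linv_def
proof (intro conjI)
  show "\<forall>j m. (j, m) \<in> rcvd s \<longrightarrow> (j, i, m) \<in> N'" using L sub unfolding linv_def by blast
  show "\<forall>w. awaiting s = Some w \<longrightarrow> (\<exists>k. proposal s = Some (k, w))" using L unfolding linv_def by blast
  show "\<forall>a v. MEcho a v \<in> queued s \<longrightarrow> v = view s \<and> (\<exists>k. proposal s = Some (k, a))" using L unfolding linv_def by blast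
  show "\<forall>a v r. (i, r, MEcho a v) \<in> N' \<longrightarrow> v < view s \<or> v = view s \<and> (\<exists>k. proposal s = Some (k, a))"
  proof (intro allI impI)
    fix a v r assume "(i, r, MEcho a v) \<in> N'"
    then have "(i, r, MEcho a v) \<in> N" by (rule fr)
    then show "v < view s \<or> v = view s \<and> (\<exists>k. proposal s = Some (k, a))" using L unfolding linv_def by blast
  qed
  show "\<forall>a b v r r'. (i, r, MEcho a v) \<in> N' \<longrightarrow> (i, r', MEcho b v) \<in> N' \<longrightarrow> a = b"
  proof (intro allI impI)
    fix a b v r r' assume "(i, r, MEcho a v) \<in> N'" "(i, r', MEcho b v) \<in> N'"
    then have "(i, r, MEcho a v) \<in> N" "(i, r', MEcho b v) \<in> N" by (auto intro: fr)
    then show "a = b" using L unfolding linv_def by blast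
  qed
  show "\<forall>m. m \<in> queued s \<longrightarrow> good n f N' i m"
  proof (intro allI impI)
    fix m assume "m \<in> queued s"
    then have "good n f N i m" using L unfolding linv_def by blast
    then show "good n f N' i m" using sub by (rule good_mono)
  qed
  show "\<forall>r m. (i, r, m) \<in> N' \<longrightarrow> good n f N' i m"
  proof (intro allI impI)
    fix r m assume "(i, r, m) \<in> N'"
    then have "(i, r, m) \<in> N" by (rule fr)
    then have "good n f N i m" using L unfolding linv_def by blast
    then show "good n f N' i m" using sub by (rule good_mono)
  qed
qed

lemma linv_enter:
  assumes "linv n f i s N" "view s < w"
  shows "linv n f i (fst (enter_view n s w)) N"
proof -
  have "good n f N i (MProof (key1 s) (key1_val s) (prev_key1 s) w)" by (simp add: good_def)
  moreover have "\<forall>a v r. (i,r,MEcho a v) \<in> N \<longrightarrow> v < w"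
  proof (intro allI impI)
    fix a v r assume "(i,r,MEcho a v) \<in> N"
    then have "v \<le> view s" using assms(1) unfolding linv_def by fastforce
    then show "v < w" using assms(2) by simp
  qed
  ultimately show ?thesis using assms(1) unfolding linv_def enter_view_def by simp
qed

lemma cnt_le:
  assumes "\<forall>j m. (j,m) \<in> rcvd s \<longrightarrow> (j,i,m) \<in> N"
  shows "cnt n s m \<le> card {j \<in> parties n. (j, i, m) \<in> N}"
  unfolding cnt_def using assms by (intro card_sub_mono) auto


lemma linv_Q:
  assumes "linv n f i s N"
    and "\<forall>j m. (j,m) \<in> rcvd s' \<longrightarrow> (j,m) \<in> rcvd s \<or> (j,i,m) \<in> N"
    and "view s' = view s" "proposal s' = proposal s"
    and "awaiting s' = awaiting s \<or> awaiting s' = None"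
    and "\<forall>m\<in>queued s'. m \<in> queued s \<or> (good n f N i m \<and>
           (\<forall>a v. m = MEcho a v \<longrightarrow> v = view s \<and> (\<exists>k. proposal s = Some (k,a))))"
  shows "linv n f i s' N"
  unfolding linv_def
proof (intro conjI)
  have L: "linv n f i s N" by (rule assms(1))
  show "\<forall>j m. (j, m) \<in> rcvd s' \<longrightarrow> (j, i, m) \<in> N" using L assms(2) unfolding linv_def by blast
  show "\<forall>w. awaiting s' = Some w \<longrightarrow> (\<exists>k. proposal s' = Some (k, w))"
    using L assms(4,5) unfolding linv_def by auto
  show "\<forall>a v. MEcho a v \<in> queued s' \<longrightarrow> v = view s' \<and> (\<exists>k. proposal s' = Some (k, a))"
  proof (intro allI impI)
    fix a v assume "MEcho a v \<in> queued s'"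
    then have "MEcho a v \<in> queued s \<or> (v = view s \<and> (\<exists>k. proposal s = Some (k,a)))" using assms(6) by blast
    then show "v = view s' \<and> (\<exists>k. proposal s' = Some (k, a))" using L assms(3,4) unfolding linv_def by auto
  qed
  show "\<forall>a v r. (i, r, MEcho a v) \<in> N \<longrightarrow> v < view s' \<or> v = view s' \<and> (\<exists>k. proposal s' = Some (k, a))"
    using L assms(3,4) unfolding linv_def by simp
  show "\<forall>a b v r r'. (i, r, MEcho a v) \<in> N \<longrightarrow> (i, r', MEcho b v) \<in> N \<longrightarrow> a = b"
    using L unfolding linv_def by blast
  show "\<forall>m. m \<in> queued s' \<longrightarrow> good n f N i m" using L assms(6) unfolding linv_def by blast
  show "\<forall>r m. (i, r, m) \<in> N \<longrightarrow> good n f N i m" using L unfolding linv_def by blast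
qed

lemma linv_O:
  assumes "linv n f i s N"
    and "rcvd s' = rcvd s" "view s' = view s" "proposal s' = proposal s"
    and "awaiting s' = awaiting s" "queued s' = queued s"
    and "\<forall>r m. (r,m) \<in> out \<longrightarrow> (\<forall>a v. m \<noteq> MEcho a v) \<and> (\<forall>M. good n f M i m)"
  shows "linv n f i s' (N \<union> {(i, r, m) | r m. (r, m) \<in> out})"
proof -
  let ?N = "N \<union> {(i, r, m) | r m. (r, m) \<in> out}"
  have sub: "N \<subseteq> ?N" by blast
  have E: "\<And>r a v. (i,r,MEcho a v) \<in> ?N \<longleftrightarrow> (i,r,MEcho a v) \<in> N" using assms(7) by blast
  have G: "\<And>m. good n f N i m \<Longrightarrow> good n f ?N i m" by (rule good_mono[OF _ sub])
  have G2: "\<And>r m. (i,r,m) \<in> ?N \<Longrightarrow> good n f ?N i m"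
  proof -
    fix r m assume "(i,r,m) \<in> ?N"
    then consider "(i,r,m) \<in> N" | "(r,m) \<in> out" by blast
    then show "good n f ?N i m"
    proof cases
      case 1
      then have "good n f N i m" using assms(1) unfolding linv_def by blast
      then show ?thesis by (rule G)
    next
      case 2
      then have "\<forall>M. good n f M i m" using assms(7) by blast
      then show ?thesis by blast
    qed
  qed
  show ?thesis unfolding linv_def E assms(2-6)
  proof (intro conjI)
    show "\<forall>j m. (j, m) \<in> rcvd s \<longrightarrow> (j, i, m) \<in> ?N" using assms(1) sub unfolding linv_def by blast
    show "\<forall>m. m \<in> queued s \<longrightarrow> good n f ?N i m" using assms(1) G unfolding linv_def by blast
    show "\<forall>r m. (i, r, m) \<in> ?N \<longrightarrow> good n f ?N i m" using G2 by blast
  qed (use assms(1) in \<open>simp_all add: linv_def\<close>)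
qed

lemma to_all_ok: "(r, m) \<in> to_all n M \<Longrightarrow> m = M"
  by (auto simp: to_all_def)

lemma linv_lstep:
  assumes "lstep n f i s s' out" "linv n f i s N"
  shows "linv n f i s' (N \<union> {(i, r, m) | r m. (r, m) \<in> out})"
  using assms(1)
proof cases
  case timer
  show ?thesis by (rule linv_O[OF assms(2)]) (auto simp: timer good_def dest: to_all_ok)
next
  case suggest
  show ?thesis by (rule linv_O[OF assms(2)]) (auto simp: suggest good_def)
next
  case (send_join q j)
  let ?N = "N \<union> {(i, r, m) | r m. (r, m) \<in> out}"
  have sub: "N \<subseteq> ?N" by blast
  have gm: "good n f N i q" using assms(2) send_join unfolding linv_def by blast
  have em: "\<And>a v. q = MEcho a v \<Longrightarrow> v = view s \<and> (\<exists>k. proposal s = Some (k,a))"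
    using assms(2) send_join unfolding linv_def by blast
  have L: "linv n f i s N" by (rule assms(2))
  show ?thesis unfolding linv_def
  proof (intro conjI)
    show "\<forall>j m. (j, m) \<in> rcvd s' \<longrightarrow> (j, i, m) \<in> ?N" using L send_join unfolding linv_def by auto
    show "\<forall>w. awaiting s' = Some w \<longrightarrow> (\<exists>k. proposal s' = Some (k, w))" using L send_join unfolding linv_def by auto
    show "\<forall>a v. MEcho a v \<in> queued s' \<longrightarrow> v = view s' \<and> (\<exists>k. proposal s' = Some (k, a))" using L send_join unfolding linv_def by auto
    have vs: "view s' = view s" "proposal s' = proposal s" using send_join by simp_all
    have P: "\<forall>a v r. (i, r, MEcho a v) \<in> ?N \<longrightarrow> v < view s \<or> v = view s \<and> (\<exists>k. proposal s = Some (k, a))"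
    proof (intro allI impI)
      fix a v r assume A: "(i,r,MEcho a v) \<in> ?N"
      then consider "(i,r,MEcho a v) \<in> N" | "q = MEcho a v" using send_join by blast
      then show "v < view s \<or> v = view s \<and> (\<exists>k. proposal s = Some (k, a))"
      proof cases
        case 1 then show ?thesis using L unfolding linv_def by blast
      next
        case 2 then show ?thesis using em by blast
      qed
    qed
    then show "\<forall>a v r. (i, r, MEcho a v) \<in> ?N \<longrightarrow> v < view s' \<or> v = view s' \<and> (\<exists>k. proposal s' = Some (k, a))"
      unfolding vs .
    show "\<forall>a b v r r'. (i, r, MEcho a v) \<in> ?N \<longrightarrow> (i, r', MEcho b v) \<in> ?N \<longrightarrow> a = b"
    proof (intro allI impI)
      fix a b v r r' assume A: "(i, r, MEcho a v) \<in> ?N" and B: "(i, r', MEcho b v) \<in> ?N"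
      show "a = b"
      proof (cases "q = MEcho a v \<or> q = MEcho b v")
        case True
        then have "v = view s" using em by blast
        then have "v = view s" by simp
        have "\<exists>k. proposal s = Some (k,a)" using P A \<open>v = view s\<close> by blast
        moreover have "\<exists>k. proposal s = Some (k,b)" using P B \<open>v = view s\<close> by blast
        ultimately show ?thesis by auto
      next
        case False
        then have "(i, r, MEcho a v) \<in> N" "(i, r', MEcho b v) \<in> N" using A B send_join(2) by auto
        then show ?thesis using L unfolding linv_def by blast
      qed
    qed
    have "\<forall>m. m \<in> queued s \<longrightarrow> good n f ?N i m"
    proof (intro allI impI)
      fix m assume "m \<in> queued s" then have "good n f N i m" using L unfolding linv_def by blast
      then show "good n f ?N i m" by (rule good_mono[OF _ sub])
    qed
    then show "\<forall>m. m \<in> queued s' \<longrightarrow> good n f ?N i m" using send_join by simp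
    have "\<forall>r m. (i, r, m) \<in> N \<longrightarrow> good n f ?N i m"
    proof (intro allI impI)
      fix r m assume "(i, r, m) \<in> N" then have "good n f N i m" using L unfolding linv_def by blast
      then show "good n f ?N i m" by (rule good_mono[OF _ sub])
    qed
    moreover have "good n f ?N i q" by (rule good_mono[OF gm sub])
    ultimately show "\<forall>r m. (i, r, m) \<in> ?N \<longrightarrow> good n f ?N i m" using send_join(2) by blast
  qed
next
  case (add_sugg j k3 v3)
  show ?thesis using linv_Q[OF assms(2), of s'] add_sugg by simp
next
  case (propose j k w)
  show ?thesis using linv_Q[OF assms(2), of s'] propose by (simp add: good_def)
next
  case (echo_await w)
  have "\<exists>k. proposal s = Some (k,w)" using assms(2) echo_await unfolding linv_def by blast
  then show ?thesis using linv_Q[OF assms(2), of s'] echo_await by (simp add: good_def)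
next
  case (key1 val)
  have "good n f N i (MKey1 val (view s))"
    using cnt_le[of s i N n "MEcho val (view s)"] assms(2) key1 unfolding linv_def good_def by simp
  then show ?thesis using linv_Q[OF assms(2), of s'] key1 by simp
next
  case (key2 val)
  have "good n f N i (MKey2 val (view s))"
    using cnt_le[of s i N n "MKey1 val (view s)"] assms(2) key2 unfolding linv_def good_def by simp
  then show ?thesis using linv_Q[OF assms(2), of s'] key2 by simp
next
  case (key3 val)
  have "good n f N i (MKey3 val (view s))"
    using cnt_le[of s i N n "MKey2 val (view s)"] assms(2) key3 unfolding linv_def good_def by simp
  then show ?thesis using linv_Q[OF assms(2), of s'] key3 by simp
next
  case (lock val)
  have "good n f N i (MLock val (view s))"
    using cnt_le[of s i N n "MKey3 val (view s)"] assms(2) lock unfolding linv_def good_def by simp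
  then show ?thesis using linv_Q[OF assms(2), of s'] lock by simp
next
  case (done_lock val)
  show ?thesis by (rule linv_O[OF assms(2)]) (auto simp: done_lock good_def dest: to_all_ok)
next
  case (done_amp val)
  show ?thesis by (rule linv_O[OF assms(2)]) (auto simp: done_amp good_def dest: to_all_ok)
next
  case (decide val)
  show ?thesis using linv_Q[OF assms(2), of s'] decide by simp
qed


definition harmless :: "nat \<Rightarrow> nat \<Rightarrow> nat \<Rightarrow> (nat \<times> 'v msg) set \<Rightarrow> bool" where
"harmless n f i out = (\<forall>r m. (r,m) \<in> out \<longrightarrow> (\<forall>a v. m \<noteq> MEcho a v) \<and> (\<forall>M. good n f M i m))"

lemma harmless_to_all_abort: "harmless n f i (to_all n (MAbort u))"
  by (auto simp: harmless_def to_all_def good_def)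
lemma harmless_to_all_req: "harmless n f i (to_all n (MRequest u))"
  by (auto simp: harmless_def to_all_def good_def)
lemma harmless_empty: "harmless n f i {}"
  by (auto simp: harmless_def)
lemma harmless_Un: "harmless n f i A \<Longrightarrow> harmless n f i B \<Longrightarrow> harmless n f i (A \<union> B)"
  by (auto simp: harmless_def)

lemma linv_add:
  assumes "linv n f i s N" "harmless n f i out"
  shows "linv n f i s (N \<union> {(i, r, m) | r m. (r, m) \<in> out})"
  by (rule linv_O[OF assms(1)]) (use assms(2) in \<open>simp_all add: harmless_def\<close>)

lemma linv_habort[simp]: "linv n f i (s\<lparr>habort := h\<rparr>) N = linv n f i s N"
  by (simp add: linv_def)

lemma linv_abort:
  fixes s :: "'v lst"
  assumes "abort_rule n f i j v s = (s', out)" "linv n f i s N"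
  shows "linv n f i s' N \<and> harmless n f i out"
proof (cases "habort s j < v")
  case False
  then show ?thesis using assms by (simp add: abort_rule_def harmless_empty)
next
  case True
  define s1 where "s1 = s\<lparr>habort := (habort s)(j := v)\<rparr>"
  define u where "u = kth_largest (habort s1) n (f + 1)"
  define s2 where "s2 = (if u > habort s1 i then s1\<lparr>habort := (habort s1)(i := u)\<rparr> else s1)"
  define o1 where "o1 = (if u > habort s1 i then to_all n (MAbort u) else ({} :: (nat \<times> 'v msg) set))"
  define w where "w = kth_largest (habort s2) n (n - f)"
  have eq: "abort_rule n f i j v s = (if w \<ge> view s2 then (fst (enter_view n s2 (w + 1)), o1 \<union> snd (enter_view n s2 (w + 1)))
           else (s2, o1))"
    using True unfolding abort_rule_def s1_def u_def s2_def o1_def w_def Let_def by simp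
  have L2: "linv n f i s2 N" using assms(2) unfolding s2_def s1_def by simp
  have vs2: "view s2 = view s" unfolding s2_def s1_def by simp
  have h1: "harmless n f i o1" unfolding o1_def by (simp add: harmless_to_all_abort harmless_empty)
  show ?thesis
  proof (cases "w \<ge> view s2")
    case True
    then have "s' = fst (enter_view n s2 (w + 1))" "out = o1 \<union> to_all n (MRequest (w + 1))"
      using assms(1) eq by (auto simp: enter_view_def)
    moreover have "linv n f i (fst (enter_view n s2 (w + 1))) N" using L2 True by (intro linv_enter) auto
    ultimately show ?thesis using h1 by (simp add: harmless_Un harmless_to_all_req)
  next
    case False
    then show ?thesis using assms(1) eq L2 h1 by simp
  qed
qed

lemma linv_prop:
  assumes L: "linv n f i s N" and pn: "proposal s = None"
    and r: "rcvd s' = rcvd s" and v: "view s' = view s" and p: "proposal s' = Some (k, w)"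
    and a: "awaiting s' = awaiting s \<or> awaiting s' = Some w"
    and q: "queued s' = queued s \<or> queued s' = insert (MEcho w (view s)) (queued s)"
  shows "linv n f i s' N"
proof -
  have aw: "awaiting s = None" using L pn unfolding linv_def by (cases "awaiting s") auto
  have nq: "\<And>a v. MEcho a v \<notin> queued s" using L pn unfolding linv_def by auto
  have ne: "\<And>a v r. (i,r,MEcho a v) \<in> N \<Longrightarrow> v < view s" using L pn unfolding linv_def by fastforce
  have gq: "good n f N i (MEcho w (view s))" by (simp add: good_def)
  show ?thesis unfolding linv_def
  proof (intro conjI)
    show "\<forall>j m. (j, m) \<in> rcvd s' \<longrightarrow> (j, i, m) \<in> N" using L r unfolding linv_def by simp
    show "\<forall>wa. awaiting s' = Some wa \<longrightarrow> (\<exists>k. proposal s' = Some (k, wa))" using a aw p by auto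
    show "\<forall>a va. MEcho a va \<in> queued s' \<longrightarrow> va = view s' \<and> (\<exists>k. proposal s' = Some (k, a))"
      using q nq v p by auto
    show "\<forall>a va r. (i, r, MEcho a va) \<in> N \<longrightarrow> va < view s' \<or> va = view s' \<and> (\<exists>k. proposal s' = Some (k, a))"
      using ne v by auto
    show "\<forall>a b va r r'. (i, r, MEcho a va) \<in> N \<longrightarrow> (i, r', MEcho b va) \<in> N \<longrightarrow> a = b"
      using L unfolding linv_def by blast
    show "\<forall>m. m \<in> queued s' \<longrightarrow> good n f N i m" using L q gq unfolding linv_def by auto
    show "\<forall>r m. (i, r, m) \<in> N \<longrightarrow> good n f N i m" using L unfolding linv_def by blast
  qed
qed

lemma linv_rcvd:
  assumes "linv n f i s N" "(j,i,m) \<in> N"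
  shows "linv n f i (s\<lparr>rcvd := insert (j, m) (rcvd s)\<rparr>) N"
  by (rule linv_Q[OF assms(1)]) (use assms(2) in auto)

lemma linv_recv:
  assumes "(j,i,m) \<in> N" "recv n f i j m s = (s', out)" "linv n f i s N"
  shows "linv n f i s' (N \<union> {(i, r, m') | r m'. (r, m') \<in> out})"
proof -
  have "linv n f i s' N \<and> harmless n f i out"
  proof (cases m)
    case (MRequest v)
    then show ?thesis using assms(2,3) linv_Q[OF assms(3), of s'] by (auto simp: recv_def harmless_empty)
  next
    case (MDone v)
    then show ?thesis using assms(2,3) linv_Q[OF assms(3), of s'] by (auto simp: recv_def harmless_empty)
  next
    case (MAbort v)
    then show ?thesis using assms(2,3) linv_abort by (simp add: recv_def)
  next
    case (MSuggest k3 v3 k2 v2 pk2 v)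
    then show ?thesis using assms(2,3) linv_Q[OF assms(3), of s'] by (auto simp: recv_def harmless_empty Let_def split: if_splits)
  next
    case (MProof k1 v1 pk1 v)
    then show ?thesis using assms(2,3) linv_Q[OF assms(3), of s'] by (auto simp: recv_def harmless_empty Let_def split: if_splits)
  next
    case (MPropose k w v)
    show ?thesis
    proof (cases "v = view s \<and> j = prim n v \<and> proposal s = None")
      case True
      then have pn: "proposal s = None" and vv: "v = view s" by auto
      have "linv n f i s' N" using assms(2) MPropose True
        by (auto simp: recv_def Let_def split: if_splits intro!: linv_prop[OF assms(3) pn])
      moreover have "out = {}" using assms(2) MPropose True by (auto simp: recv_def Let_def split: if_splits)
      ultimately show ?thesis by (simp add: harmless_empty)
    next
      case False
      then show ?thesis using assms(2,3) MPropose by (auto simp: recv_def harmless_empty)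
    qed
  next
    case (MEcho a v)
    then show ?thesis using assms linv_rcvd by (auto simp: recv_def harmless_empty split: if_splits)
  next
    case (MKey1 a v)
    then show ?thesis using assms linv_rcvd by (auto simp: recv_def harmless_empty split: if_splits)
  next
    case (MKey2 a v)
    then show ?thesis using assms linv_rcvd by (auto simp: recv_def harmless_empty split: if_splits)
  next
    case (MKey3 a v)
    then show ?thesis using assms linv_rcvd by (auto simp: recv_def harmless_empty split: if_splits)
  next
    case (MLock a v)
    then show ?thesis using assms linv_rcvd by (auto simp: recv_def harmless_empty split: if_splits)
  qed
  then show ?thesis using linv_add by blast
qed


lemma reach_inv:
  assumes "ithsreach n f F x g"
  shows "\<forall>i\<in>parties n - F. linv n f i (loc g i) (net g)"
  using assms
proof induction
  case init
  show ?case by (auto simp: ginit_def init_lst_def enter_view_def linv_def good_def)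
next
  case (local g i' s' out)
  show ?case
  proof
    fix i assume i: "i \<in> parties n - F"
    show "linv n f i (loc (g\<lparr>loc := (loc g)(i' := s'), net := net g \<union> {(i', r, m) |r m. (r, m) \<in> out}\<rparr>) i)
        (net (g\<lparr>loc := (loc g)(i' := s'), net := net g \<union> {(i', r, m) |r m. (r, m) \<in> out}\<rparr>))"
    proof (cases "i = i'")
      case True
      then show ?thesis using linv_lstep[OF local(3)] local(4) i by simp
    next
      case False
      have "linv n f i (loc g i) (net g \<union> {(i', r, m) |r m. (r, m) \<in> out})"
        by (rule linv_mono) (use local(4) i False in auto)
      then show ?thesis using False by simp
    qed
  qed
next
  case (deliver g j i' m s' out)
  show ?case
  proof
    fix i assume i: "i \<in> parties n - F"
    show "linv n f i (loc (g\<lparr>loc := (loc g)(i' := s'), net := net g \<union> {(i', r, m') |r m'. (r, m') \<in> out},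
                          dlv := insert (j, i', m) (dlv g)\<rparr>) i)
        (net (g\<lparr>loc := (loc g)(i' := s'), net := net g \<union> {(i', r, m') |r m'. (r, m') \<in> out},
                          dlv := insert (j, i', m) (dlv g)\<rparr>))"
    proof (cases "i = i'")
      case True
      then show ?thesis using linv_recv[OF deliver(2) deliver(6)] deliver(7) i by simp
    next
      case False
      have "linv n f i (loc g i) (net g \<union> {(i', r, m') |r m'. (r, m') \<in> out})"
        by (rule linv_mono) (use deliver(7) i False in auto)
      then show ?thesis using False by simp
    qed
  qed
next
  case (byz g j r m)
  show ?case
  proof
    fix i assume i: "i \<in> parties n - F"
    have "linv n f i (loc g i) (insert (j, r, m) (net g))"
      by (rule linv_mono) (use byz i in auto)
    then show "linv n f i (loc (g\<lparr>net := insert (j, r, m) (net g)\<rparr>) i) (net (g\<lparr>net := insert (j, r, m) (net g)\<rparr>))"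
      by simp
  qed
qed

lemma card_parties[simp]: "card (parties n) = n" by (simp add: parties_def)

lemma count1:
  assumes "3 * f < n" "F \<subseteq> parties n" "card F \<le> f" "n - f \<le> card {k \<in> parties n. P k}"
  shows "\<exists>k\<in>parties n - F. P k"
proof (rule ccontr)
  assume "\<not> ?thesis"
  then have "{k \<in> parties n. P k} \<subseteq> F" by blast
  then have "card {k \<in> parties n. P k} \<le> card F"
    by (rule card_mono[OF finite_subset[OF assms(2) finite_parties]])
  then show False using assms by linarith
qed

lemma count2:
  assumes "3 * f < n" "F \<subseteq> parties n" "card F \<le> f"
    "n - f \<le> card {k \<in> parties n. P k}" "n - f \<le> card {k \<in> parties n. Q k}"
  shows "\<exists>k\<in>parties n - F. P k \<and> Q k"
proof (rule ccontr)
  let ?A = "{k \<in> parties n. P k}" and ?B = "{k \<in> parties n. Q k}"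
  assume "\<not> ?thesis"
  then have "?A \<inter> ?B \<subseteq> F" by blast
  then have c: "card (?A \<inter> ?B) \<le> card F"
    by (rule card_mono[OF finite_subset[OF assms(2) finite_parties]])
  have "card (?A \<union> ?B) \<le> n" using card_mono[of "parties n" "?A \<union> ?B"] by auto
  moreover have "card ?A + card ?B = card (?A \<union> ?B) + card (?A \<inter> ?B)"
    by (rule card_Un_Int) auto
  ultimately show False using c assms by linarith
qed

theorem corollary2p4:
  fixes n f :: nat and F :: "nat set" and x :: "nat \<Rightarrow> 'v" and g :: "'v gst"
  assumes "3 * f < n" and "F \<subseteq> parties n" and "card F \<le> f"
    and "ithsreach n f F x g"
    and "i \<in> parties n - F" and "j \<in> parties n - F"
    and "(i, r, m) \<in> net g" and "m \<in> {MKey1 val v, MKey2 val v, MKey3 val v, MLock val v}"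
    and "(j, r', m') \<in> net g" and "m' \<in> {MKey1 val' v, MKey2 val' v, MKey3 val' v, MLock val' v}"
  shows "val = val'"
proof -
  note I = reach_inv[OF assms(4)]
  note c1 = count1[OF assms(1-3)]
  have G: "\<And>i r m. i \<in> parties n - F \<Longrightarrow> (i, r, m) \<in> net g \<Longrightarrow> good n f (net g) i m"
    using I unfolding linv_def by blast
  have U: "\<And>k r r' a b v. k \<in> parties n - F \<Longrightarrow> (k, r, MEcho a v) \<in> net g \<Longrightarrow> (k, r', MEcho b v) \<in> net g \<Longrightarrow> a = b"
    using I unfolding linv_def by blast
  have K1: "a = b" if "i \<in> parties n - F" "j \<in> parties n - F" "(i, r, MKey1 a v) \<in> net g"
      "(j, r', MKey1 b v) \<in> net g" for i j r r' a b
  proof -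
    have "n - f \<le> card {k \<in> parties n. (k, i, MEcho a v) \<in> net g}"
      using G[OF that(1,3)] by (simp add: good_def)
    moreover have "n - f \<le> card {k \<in> parties n. (k, j, MEcho b v) \<in> net g}"
      using G[OF that(2,4)] by (simp add: good_def)
    ultimately have "\<exists>k\<in>parties n - F. (k, i, MEcho a v) \<in> net g \<and> (k, j, MEcho b v) \<in> net g"
      by (rule count2[OF assms(1-3)])
    then obtain k where "k \<in> parties n - F" "(k, i, MEcho a v) \<in> net g" "(k, j, MEcho b v) \<in> net g"
      by blast
    then show ?thesis using U by blast
  qed
  have D2: "\<exists>k\<in>parties n - F. \<exists>r. (k, r, MKey1 a v) \<in> net g"
    if "i \<in> parties n - F" "(i, r, MKey2 a v) \<in> net g" for i r a
  proof -
    have "n - f \<le> card {k \<in> parties n. (k, i, MKey1 a v) \<in> net g}"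
      using G[OF that] by (simp add: good_def)
    then have "\<exists>k\<in>parties n - F. (k, i, MKey1 a v) \<in> net g" by (rule c1)
    then show ?thesis by blast
  qed
  have D3: "\<exists>k\<in>parties n - F. \<exists>r. (k, r, MKey2 a v) \<in> net g"
    if "i \<in> parties n - F" "(i, r, MKey3 a v) \<in> net g" for i r a
  proof -
    have "n - f \<le> card {k \<in> parties n. (k, i, MKey2 a v) \<in> net g}"
      using G[OF that] by (simp add: good_def)
    then have "\<exists>k\<in>parties n - F. (k, i, MKey2 a v) \<in> net g" by (rule c1)
    then show ?thesis by blast
  qed
  have D4: "\<exists>k\<in>parties n - F. \<exists>r. (k, r, MKey3 a v) \<in> net g"
    if "i \<in> parties n - F" "(i, r, MLock a v) \<in> net g" for i r a
  proof -
    have "n - f \<le> card {k \<in> parties n. (k, i, MKey3 a v) \<in> net g}"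
      using G[OF that] by (simp add: good_def)
    then have "\<exists>k\<in>parties n - F. (k, i, MKey3 a v) \<in> net g" by (rule c1)
    then show ?thesis by blast
  qed
  have Down: "\<exists>k\<in>parties n - F. \<exists>r. (k, r, MKey1 a v) \<in> net g"
    if H: "i \<in> parties n - F" "(i, r, mm) \<in> net g" "mm \<in> {MKey1 a v, MKey2 a v, MKey3 a v, MLock a v}" for i r a mm
  proof -
    have "mm = MKey1 a v \<or> mm = MKey2 a v \<or> mm = MKey3 a v \<or> mm = MLock a v" using H(3) by simp
    then show ?thesis
    proof (elim disjE)
      assume "mm = MKey1 a v" then show ?thesis using H(1,2) by blast
    next
      assume "mm = MKey2 a v" then show ?thesis using H(1,2) D2 by blast
    next
      assume "mm = MKey3 a v"
      then obtain k q where "k \<in> parties n - F" "(k, q, MKey2 a v) \<in> net g" using H(1,2) D3 by blast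
      then show ?thesis using D2 by blast
    next
      assume "mm = MLock a v"
      then obtain k q where "k \<in> parties n - F" "(k, q, MKey3 a v) \<in> net g" using H(1,2) D4 by blast
      then obtain k' q' where "k' \<in> parties n - F" "(k', q', MKey2 a v) \<in> net g" using D3 by blast
      then show ?thesis using D2 by blast
    qed
  qed
  obtain k1 q1 where "k1 \<in> parties n - F" "(k1, q1, MKey1 val v) \<in> net g"
    using Down[OF assms(5,7,8)] by blast
  moreover obtain k2 q2 where "k2 \<in> parties n - F" "(k2, q2, MKey1 val' v) \<in> net g"
    using Down[OF assms(6,9,10)] by blast
  ultimately show ?thesis using K1 by blast
qed

end
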